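(* If $U$ is an atemporal action model over $L_{\mathsf{YDEL}}$, then $U^\sharp$ is an action model over $L_{\mathsf{RDETL}}$ of the kind allowed in $L_{\mathsf{RDETL}}$, i.e. $U^\sharp\in\mathsf{Act}(L_{\mathsf{RDETL}})$.
   Context: Fix a nonempty finite set $\mathsf{Agt}$ of agents and a nonempty set $\mathsf{Prop}$ of letters. Kripke models $M=(W^M,(\to^M_a)_a,\leadsto^M,V^M)$: nonempty $W^M$, binary relations $\to^M_a,\leadsto^M$, valuation $V^M:\mathsf{Prop}\to\mathcal P(W^M)$. Action models over a set of formulas $F$: $U=(W^U,(\to^U_a)_a,\leadsto^U,\mathrm{pre}^U)$ with $W^U$ nonempty finite, binary relations, $\mathrm{pre}^U:W^U\to F$; atemporal means $\leadsto^U=\emptyset$; $s$ is a past state if no $s'\leadsto^Us$. $L_{\mathsf{DETL}}$: $\varphi::=p\mid\neg\varphi\mid\varphi\wedge\varphi\mid\Box_a\varphi\mid[Y]\varphi\mid[U,s]\varphi$ with $(U,s)$ any pointed action model over $L_{\mathsf{DETL}}$; semantics: Boolean standard, $\Box_a$ over $\to^M_a$-successors, $[Y]$ over $\leadsto^M$-predecessors, and $M,w\models[U,s]\varphi$ iff $M,w\models\mathrm{pre}^U(s)$ implies $M[U],(w,s)\models\varphi$, where $M[U]$ has worlds $\{(v,t):M,v\models\mathrm{pre}^U(t)\}$, $(v,t)\to_a(v',t')$ iff $v\to^M_av'$ and $t\to^U_at'$, $(v',t')\leadsto(v,t)$ iff ($v'\leadsto^Mv$, $t'=t$, $t$ past state)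 or ($v'=v$, $t'\leadsto^Ut$), valuation inherited from $M$; $\models\varphi$ means truth at all pointed Kripke models. $L_{\mathsf{YDEL}}$ is the fragment of $L_{\mathsf{DETL}}$ in which all action models used (recursively) are atemporal; the symbol $\flat$ is never a world or event of it. Progressions, histories, depth: a progression is a finite nonempty $x_0,\dots,x_n$ with $x_i\leadsto x_{i+1}$; a history cannot be extended at its beginning; $\mathrm{depth}(x)$ is the maximal length of a history ending at $x$ ($\infty$ if none). Action model properties: depth-definedness (all depths finite); knowledge of the past ($w'\leadsto w\to_av$ implies $\exists v'\leadsto v$); knowledge of the initial time ($w\to_av$ and no $w'\leadsto w$ imply no $v'\leadsto v$); uniqueness of the past; perfect recall ($w\leadsto v\to_av'$ implies $\exists w'$, $w\to_aw'\leadsto v'$); history preservation ($s'\leadsto^Us$ implies $\models\mathrm{pre}^U(s)\to\mathrm{pre}^U(s')$, and every past state is an epistemic past state, i.e. a past state with valid precondition whose only outgoing epistemic arrows are the loops $s\to_as$ for each $a$). $L_{\mathsf{RDETL}}$ is the sublanguage of $L_{\mathsf{DETL}}$ allowing only $[U,s]$ with $U$ having preconditions (recursively) in $L_{\mathsf{RDETL}}$ and satisfying depth-definedness, knowledge of the past, history preservation, knowledge of the initial time, uniqueness of the past and perfect recall; $\mathsf{Act}(L_{\mathsf{RDETL}})$ denotes the set of such action models. Translation $\sharp$: $\bot^\sharp=\bot$, $p^\sharp=p$, $\sharp$ commutes with $\neg$, $\wedge$, $\Box_a$, $[Y]$, and $([U,s]\varphi)^\sharp=[U^\sharp,s]\varphi^\sharp$,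 where $W^{U^\sharp}=W^U\cup\{\flat\}$; $s\to^{U^\sharp}_as'$ iff $s\to^U_as'$ or $s=s'=\flat$; $s\leadsto^{U^\sharp}s'$ iff $s=\flat$ and $s'\in W^U$; $\mathrm{pre}^{U^\sharp}(s)=\mathrm{pre}^U(s)^\sharp$ for $s\in W^U$ and $\mathrm{pre}^{U^\sharp}(\flat)=\top$. *)

theory Defs
  imports Main "HOL-Library.Extended_Nat"
begin

text \<open>Events of action models. The distinguished event Flat plays the role of the
  fresh symbol (flat) used by the translation; all other events are Ev n.\<close>
datatype ev = Flat | Ev nat

text \<open>The constructor Act carries a
  pointed action model (events, epistemic relations, temporal relation, preconditions,
  point) and the formula in its scope: Act E R T P s f stands for [U,s]f.\<close>
datatype ('p,'a) fm =
    Atom 'p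
  | Neg "('p,'a) fm"
  | Conj "('p,'a) fm" "('p,'a) fm"
  | Box 'a "('p,'a) fm"
  | Yest "('p,'a) fm"
  | Act "ev set" "'a \<Rightarrow> (ev \<times> ev) set" "(ev \<times> ev) set" "ev \<Rightarrow> ('p,'a) fm" ev "('p,'a) fm"

definition fbot :: "('p,'a) fm" where
  "fbot = Conj (Atom undefined) (Neg (Atom undefined))"

definition ftop :: "('p,'a) fm" where
  "ftop = Neg fbot"

definition fimp :: "('p,'a) fm \<Rightarrow> ('p,'a) fm \<Rightarrow> ('p,'a) fm" where
  "fimp f g = Neg (Conj f (Neg g))"

record ('p,'a) amodel =
  evs  :: "ev set"
  erel :: "'a \<Rightarrow> (ev \<times> ev) set"
  etmp :: "(ev \<times> ev) set"
  pre  :: "ev \<Rightarrow> ('p,'a) fm"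

definition act :: "('p,'a) amodel \<Rightarrow> ev \<Rightarrow> ('p,'a) fm \<Rightarrow> ('p,'a) fm" where
  "act U s f = Act (evs U) (erel U) (etmp U) (pre U) s f"

definition mk_am :: "ev set \<Rightarrow> ('a \<Rightarrow> (ev \<times> ev) set) \<Rightarrow> (ev \<times> ev) set \<Rightarrow> (ev \<Rightarrow> ('p,'a) fm)
    \<Rightarrow> ('p,'a) amodel" where
  "mk_am E R T P = \<lparr> evs = E, erel = R, etmp = T, pre = P \<rparr>"

definition wf_am :: "('p,'a) amodel \<Rightarrow> bool" where
  "wf_am U \<longleftrightarrow> evs U \<noteq> {} \<and> finite (evs U) \<and> (\<forall>a. erel U a \<subseteq> evs U \<times> evs U)
     \<and> etmp U \<subseteq> evs U \<times> evs U"

definition atemporal :: "('p,'a) amodel \<Rightarrow> bool" where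
  "atemporal U \<longleftrightarrow> etmp U = {}"

definition past_state :: "('p,'a) amodel \<Rightarrow> ev \<Rightarrow> bool" where
  "past_state U s \<longleftrightarrow> s \<in> evs U \<and> (\<nexists>s'. (s', s) \<in> etmp U)"

text \<open>Worlds are pairs of a base world of type 'u and a list of events; the product
  update sends the world (v,t) of M[U] to ext v t. This is isomorphic to the pair
  construction of the paper, and every Kripke model (with worlds of type 'u) is
  isomorphic to one whose worlds are of the form (u, []).\<close>
type_synonym 'u world = "'u \<times> ev list"

record ('u,'p,'a) kmodel =
  Wd  :: "'u world set"
  Rel :: "'a \<Rightarrow> ('u world \<times> 'u world) set"
  Tmp :: "('u world \<times> 'u world) set"
  Val :: "'p \<Rightarrow> 'u world set"

definition kwf :: "('u,'p,'a) kmodel \<Rightarrow> bool" where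
  "kwf M \<longleftrightarrow> Wd M \<noteq> {} \<and> (\<forall>a. Rel M a \<subseteq> Wd M \<times> Wd M) \<and> Tmp M \<subseteq> Wd M \<times> Wd M
     \<and> (\<forall>p. Val M p \<subseteq> Wd M)"

definition ext :: "'u world \<Rightarrow> ev \<Rightarrow> 'u world" where
  "ext w t = (fst w, snd w @ [t])"

text \<open>Product update M[U]; P v t stands for "M, v satisfies pre(t)".\<close>
definition upd :: "('u,'p,'a) kmodel \<Rightarrow> ev set \<Rightarrow> ('a \<Rightarrow> (ev \<times> ev) set) \<Rightarrow> (ev \<times> ev) set
   \<Rightarrow> ('u world \<Rightarrow> ev \<Rightarrow> bool) \<Rightarrow> ('u,'p,'a) kmodel" where
 "upd M E R T P = (let W' = {ext v t | v t. v \<in> Wd M \<and> t \<in> E \<and> P v t} in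
   \<lparr> Wd = W',
     Rel = (\<lambda>a. {(ext v t, ext v' t') | v t v' t'. ext v t \<in> W' \<and> ext v' t' \<in> W'
                 \<and> (v,v') \<in> Rel M a \<and> (t,t') \<in> R a}),
     Tmp = {(ext v' t', ext v t) | v t v' t'. ext v t \<in> W' \<and> ext v' t' \<in> W' \<and>
              (((v',v) \<in> Tmp M \<and> t' = t \<and> (\<nexists>t0. (t0,t) \<in> T)) \<or> (v' = v \<and> (t',t) \<in> T))},
     Val = (\<lambda>p. {ext v t | v t. ext v t \<in> W' \<and> v \<in> Val M p}) \<rparr>)"

primrec sat :: "('u,'p,'a) kmodel \<Rightarrow> 'u world \<Rightarrow> ('p,'a) fm \<Rightarrow> bool" where
  "sat M w (Atom p) = (w \<in> Val M p)"
| "sat M w (Neg f) = (\<not> sat M w f)"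
| "sat M w (Conj f g) = (sat M w f \<and> sat M w g)"
| "sat M w (Box a f) = (\<forall>v \<in> Wd M. (w,v) \<in> Rel M a \<longrightarrow> sat M v f)"
| "sat M w (Yest f) = (\<forall>v \<in> Wd M. (v,w) \<in> Tmp M \<longrightarrow> sat M v f)"
| "sat M w (Act E R T P s f) =
     (sat M w (P s) \<longrightarrow> sat (upd M E R T (\<lambda>v t. sat M v (P t))) (ext w s) f)"

definition valid :: "'u itself \<Rightarrow> ('p,'a) fm \<Rightarrow> bool" where
  "valid (_ :: 'u itself) f \<longleftrightarrow>
     (\<forall>(M :: ('u,'p,'a) kmodel) w. kwf M \<and> w \<in> Wd M \<longrightarrow> sat M w f)"

definition progression :: "('p,'a) amodel \<Rightarrow> ev list \<Rightarrow> bool" where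
  "progression U xs \<longleftrightarrow> xs \<noteq> [] \<and> set xs \<subseteq> evs U
     \<and> (\<forall>i. Suc i < length xs \<longrightarrow> (xs ! i, xs ! Suc i) \<in> etmp U)"

definition history :: "('p,'a) amodel \<Rightarrow> ev list \<Rightarrow> bool" where
  "history U xs \<longleftrightarrow> progression U xs \<and> (\<nexists>y. (y, hd xs) \<in> etmp U)"

text \<open>Length of the progression x0,...,xn is n.\<close>
definition hist_lengths :: "('p,'a) amodel \<Rightarrow> ev \<Rightarrow> nat set" where
  "hist_lengths U x = {length xs - 1 | xs. history U xs \<and> last xs = x}"

definition depth :: "('p,'a) amodel \<Rightarrow> ev \<Rightarrow> enat" where
  "depth U x = (if hist_lengths U x \<noteq> {} \<and> finite (hist_lengths U x)
                then enat (Max (hist_lengths U x)) else \<infinity>)"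

definition depth_defined :: "('p,'a) amodel \<Rightarrow> bool" where
  "depth_defined U \<longleftrightarrow> (\<forall>x \<in> evs U. depth U x \<noteq> \<infinity>)"

definition knowledge_of_past :: "('p,'a) amodel \<Rightarrow> bool" where
  "knowledge_of_past U \<longleftrightarrow> (\<forall>a w' w v. (w', w) \<in> etmp U \<and> (w, v) \<in> erel U a
      \<longrightarrow> (\<exists>v'. (v', v) \<in> etmp U))"

definition knowledge_of_initial_time :: "('p,'a) amodel \<Rightarrow> bool" where
  "knowledge_of_initial_time U \<longleftrightarrow> (\<forall>a w v. (w, v) \<in> erel U a \<and> (\<nexists>w'. (w', w) \<in> etmp U)
      \<longrightarrow> (\<nexists>v'. (v', v) \<in> etmp U))"

definition uniqueness_of_past :: "('p,'a) amodel \<Rightarrow> bool" where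
  "uniqueness_of_past U \<longleftrightarrow> (\<forall>w w1 w2. (w1, w) \<in> etmp U \<and> (w2, w) \<in> etmp U \<longrightarrow> w1 = w2)"

definition perfect_recall :: "('p,'a) amodel \<Rightarrow> bool" where
  "perfect_recall U \<longleftrightarrow> (\<forall>a w v v'. (w, v) \<in> etmp U \<and> (v, v') \<in> erel U a
      \<longrightarrow> (\<exists>w'. (w, w') \<in> erel U a \<and> (w', v') \<in> etmp U))"

definition epistemic_past_state :: "'u itself \<Rightarrow> ('p,'a) amodel \<Rightarrow> ev \<Rightarrow> bool" where
  "epistemic_past_state TY U s \<longleftrightarrow> past_state U s \<and> valid TY (pre U s)
     \<and> (\<forall>a t. (s, t) \<in> erel U a \<longleftrightarrow> t = s)"

definition history_preservation :: "'u itself \<Rightarrow> ('p,'a) amodel \<Rightarrow> bool" where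
  "history_preservation TY U \<longleftrightarrow>
     (\<forall>s' s. (s', s) \<in> etmp U \<longrightarrow> valid TY (fimp (pre U s) (pre U s')))
     \<and> (\<forall>s. past_state U s \<longrightarrow> epistemic_past_state TY U s)"

definition rdetl_props :: "'u itself \<Rightarrow> ('p,'a) amodel \<Rightarrow> bool" where
  "rdetl_props TY U \<longleftrightarrow> wf_am U \<and> depth_defined U \<and> knowledge_of_past U
     \<and> history_preservation TY U \<and> knowledge_of_initial_time U \<and> uniqueness_of_past U
     \<and> perfect_recall U"

primrec in_ydel :: "('p,'a) fm \<Rightarrow> bool" where
  "in_ydel (Atom p) = True"
| "in_ydel (Neg f) = in_ydel f"
| "in_ydel (Conj f g) = (in_ydel f \<and> in_ydel g)"
| "in_ydel (Box a f) = in_ydel f"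
| "in_ydel (Yest f) = in_ydel f"
| "in_ydel (Act E R T P s f) =
     (wf_am (mk_am E R T P) \<and> atemporal (mk_am E R T P) \<and> Flat \<notin> E
      \<and> (\<forall>t \<in> E. in_ydel (P t)) \<and> s \<in> E \<and> in_ydel f)"

definition ydel_am :: "('p,'a) amodel \<Rightarrow> bool" where
  "ydel_am U \<longleftrightarrow> wf_am U \<and> Flat \<notin> evs U \<and> (\<forall>t \<in> evs U. in_ydel (pre U t))"

primrec in_rdetl :: "'u itself \<Rightarrow> ('p,'a) fm \<Rightarrow> bool" where
  "in_rdetl TY (Atom p) = True"
| "in_rdetl TY (Neg f) = in_rdetl TY f"
| "in_rdetl TY (Conj f g) = (in_rdetl TY f \<and> in_rdetl TY g)"
| "in_rdetl TY (Box a f) = in_rdetl TY f"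
| "in_rdetl TY (Yest f) = in_rdetl TY f"
| "in_rdetl TY (Act E R T P s f) =
     (rdetl_props TY (mk_am E R T P) \<and> (\<forall>t \<in> E. in_rdetl TY (P t)) \<and> s \<in> E \<and> in_rdetl TY f)"

definition in_Act_rdetl :: "'u itself \<Rightarrow> ('p,'a) amodel \<Rightarrow> bool" where
  "in_Act_rdetl TY U \<longleftrightarrow> rdetl_props TY U \<and> (\<forall>t \<in> evs U. in_rdetl TY (pre U t))"

primrec sharp :: "('p,'a) fm \<Rightarrow> ('p,'a) fm" where
  "sharp (Atom p) = Atom p"
| "sharp (Neg f) = Neg (sharp f)"
| "sharp (Conj f g) = Conj (sharp f) (sharp g)"
| "sharp (Box a f) = Box a (sharp f)"
| "sharp (Yest f) = Yest (sharp f)"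
| "sharp (Act E R T P s f) =
     Act (insert Flat E) (\<lambda>a. R a \<union> {(Flat, Flat)}) ({Flat} \<times> E)
         (\<lambda>t. if t = Flat then ftop else sharp (P t)) s (sharp f)"

definition sharp_am :: "('p,'a) amodel \<Rightarrow> ('p,'a) amodel" where
  "sharp_am U = \<lparr> evs = insert Flat (evs U),
                  erel = (\<lambda>a. erel U a \<union> {(Flat, Flat)}),
                  etmp = {Flat} \<times> evs U,
                  pre = (\<lambda>t. if t = Flat then ftop else sharp (pre U t)) \<rparr>"

end

theory Submission
  imports Defs
begin

lemma valid_ftop: "valid TY ftop"
  by (simp add: valid_def ftop_def fbot_def)

lemma valid_imp_top: "valid TY (fimp f ftop)"
  by (simp add: valid_def ftop_def fbot_def fimp_def)

lemma in_rdetl_ftop: "in_rdetl TY ftop"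
  by (simp add: ftop_def fbot_def)

lemma prog_short:
  assumes "progression V xs" "etmp V = {Flat} \<times> E" "Flat \<notin> E"
  shows "length xs \<le> 2"
proof (rule ccontr)
  assume "\<not> length xs \<le> 2"
  then have l: "Suc 0 < length xs" "Suc (Suc 0) < length xs" by auto
  have "\<forall>i. Suc i < length xs \<longrightarrow> (xs ! i, xs ! Suc i) \<in> etmp V"
    using assms(1) unfolding progression_def by blast
  then have "(xs!0, xs!Suc 0) \<in> etmp V" "(xs!Suc 0, xs!Suc (Suc 0)) \<in> etmp V"
    using l by blast+
  then show False using assms by auto
qed

lemma props_general:
  fixes V :: "('p,'a) amodel"
  assumes wf: "wf_am U" and at: "etmp U = {}" and fl: "Flat \<notin> evs U"
    and V: "evs V = insert Flat (evs U)" "erel V = (\<lambda>a. erel U a \<union> {(Flat, Flat)})"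
      "etmp V = {Flat} \<times> evs U" "pre V Flat = ftop"
  shows "rdetl_props TY V"
proof -
  have relU: "\<And>a x y. (x,y) \<in> erel U a \<Longrightarrow> x \<in> evs U \<and> y \<in> evs U"
    using wf unfolding wf_am_def by blast
  have "wf_am V" using wf V unfolding wf_am_def by auto
  moreover have "depth_defined V"
    unfolding depth_defined_def depth_def
  proof
    fix x assume x: "x \<in> evs V"
    have fin: "finite (hist_lengths V x)"
    proof (rule finite_subset)
      show "hist_lengths V x \<subseteq> {..1}"
        using prog_short[OF _ V(3) fl] unfolding hist_lengths_def history_def by fastforce
    qed simp
    have ne: "hist_lengths V x \<noteq> {}"
    proof (cases "x = Flat")
      case True
      have "history V [Flat]" using V fl unfolding history_def progression_def by auto
      then show ?thesis unfolding hist_lengths_def using True by force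
    next
      case False
      then have "x \<in> evs U" using x V by auto
      then have "history V [Flat, x]" using V fl unfolding history_def progression_def
        by (auto simp: less_Suc_eq)
      then show ?thesis unfolding hist_lengths_def by force
    qed
    show "(if hist_lengths V x \<noteq> {} \<and> finite (hist_lengths V x)
          then enat (Max (hist_lengths V x)) else \<infinity>) \<noteq> \<infinity>" using fin ne by simp
  qed
  moreover have "knowledge_of_past V"
    unfolding knowledge_of_past_def using V relU fl by auto
  moreover have "history_preservation TY V"
    unfolding history_preservation_def epistemic_past_state_def past_state_def
    using V relU fl by (auto simp: valid_ftop valid_imp_top)
  moreover have "knowledge_of_initial_time V"
    unfolding knowledge_of_initial_time_def using V relU fl by auto
  moreover have "uniqueness_of_past V"
    unfolding uniqueness_of_past_def using V by auto
  moreover have "perfect_recall V"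
    unfolding perfect_recall_def using V relU fl by auto
  ultimately show ?thesis unfolding rdetl_props_def by blast
qed

lemma ydel_rdetl: "in_ydel f \<Longrightarrow> in_rdetl TY (sharp f)"
proof (induction f)
  case (Act E R T P s f)
  have "rdetl_props TY (mk_am (insert Flat E) (\<lambda>a. R a \<union> {(Flat, Flat)}) ({Flat} \<times> E)
         (\<lambda>t. if t = Flat then ftop else sharp (P t)))"
    by (rule props_general[where U="mk_am E R T P"])
      (use Act.prems in \<open>auto simp: mk_am_def atemporal_def\<close>)
  moreover have "\<forall>t \<in> insert Flat E. in_rdetl TY (if t = Flat then ftop else sharp (P t))"
    using Act by (auto simp: in_rdetl_ftop)
  ultimately show ?case using Act by auto
qed auto

theorem lemma30:
  fixes U :: "('p, 'a :: finite) amodel"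
  assumes "ydel_am U" and "atemporal U"
  shows "in_Act_rdetl TYPE('u) (sharp_am U)"
proof -
  have "rdetl_props TYPE('u) (sharp_am U)"
    by (rule props_general[where U=U]) (use assms in \<open>auto simp: sharp_am_def ydel_am_def atemporal_def\<close>)
  moreover have "\<forall>t \<in> evs (sharp_am U). in_rdetl TYPE('u) (pre (sharp_am U) t)"
    using assms by (auto simp: sharp_am_def ydel_am_def in_rdetl_ftop ydel_rdetl)
  ultimately show ?thesis unfolding in_Act_rdetl_def by blast
qed

end
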